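(* Let $\lambda>1$ and $g_\lambda(x)=\frac{x^{\lambda}\Gamma(x)}{\Gamma(\lambda+x)}$, $x>0$. Then $g_\lambda\in\mathcal B_{\lambda-1}$, and $g_\lambda\notin\mathcal B_\tau$ for every $\tau\in(0,\lambda-1)$.
   Context: For $\tau>0$, $\mathcal B_\tau$ is the class of non-negative functions $f$ on $(0,\infty)$ having derivatives of all orders such that $x\mapsto f'(x)x^{1-\tau}$ is completely monotonic on $(0,\infty)$. *)

theory Defs
  imports "HOL-Analysis.Analysis"
begin

definition has_derivs_on :: "(real \<Rightarrow> real) \<Rightarrow> (nat \<Rightarrow> real \<Rightarrow> real) \<Rightarrow> real set \<Rightarrow> bool" where
  "has_derivs_on f D S \<longleftrightarrow>
     (\<forall>x\<in>S. D 0 x = f x) \<and>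
     (\<forall>n. \<forall>x\<in>S. (D n has_real_derivative D (Suc n) x) (at x))"

definition smooth_on :: "(real \<Rightarrow> real) \<Rightarrow> real set \<Rightarrow> bool" where
  "smooth_on f S \<longleftrightarrow> (\<exists>D. has_derivs_on f D S)"

definition completely_monotonic_on :: "(real \<Rightarrow> real) \<Rightarrow> real set \<Rightarrow> bool" where
  "completely_monotonic_on f S \<longleftrightarrow>
     (\<exists>D. has_derivs_on f D S \<and> (\<forall>n. \<forall>x\<in>S. (-1) ^ n * D n x \<ge> 0))"

definition class_B :: "real \<Rightarrow> (real \<Rightarrow> real) \<Rightarrow> bool" where
  "class_B \<tau> f \<longleftrightarrow>
     (\<forall>x>0. f x \<ge> 0) \<and> smooth_on f {0<..} \<and>
     completely_monotonic_on (\<lambda>x. deriv f x * x powr (1 - \<tau>)) {0<..}"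

definition g_lambda :: "real \<Rightarrow> real \<Rightarrow> real" where
  "g_lambda lam x = x powr lam * Gamma x / Gamma (lam + x)"

end

theory Submission
  imports Defs "HOL-Complex_Analysis.Cauchy_Integral_Formula"
begin

lemma exp_taylor2_bound:
  fixes y :: real
  shows "\<bar>exp y - 1 - y\<bar> \<le> y^2 * exp \<bar>y\<bar> / 2"
proof -
  obtain s where s: "\<bar>s\<bar> \<le> \<bar>y\<bar>" "exp y = (\<Sum>m<2. y^m / fact m) + exp s / fact 2 * y^2"
    using Maclaurin_exp_le[of y 2] by blast
  have "exp y - 1 - y = exp s / 2 * y^2" using s(2) by (simp add: numeral_2_eq_2)
  moreover have "exp s \<le> exp \<bar>y\<bar>" using s(1) by simp
  moreover have "0 \<le> exp s / 2 * y^2" by simp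
  ultimately have "exp s / 2 * y^2 \<le> exp \<bar>y\<bar> / 2 * y^2"
    by (intro mult_right_mono divide_right_mono) auto
  moreover have "\<bar>exp y - 1 - y\<bar> = exp s / 2 * y^2"
    unfolding \<open>exp y - 1 - y = exp s / 2 * y^2\<close> by simp
  ultimately show ?thesis by (simp add: mult_ac)
qed

lemma powr_taylor_bound:
  fixes t x h :: real
  assumes t: "0 < t" "t < 1" and x: "x > 0" and h: "\<bar>h\<bar> \<le> x / 2"
  shows "\<bar>t powr (x + h) - t powr x - h * ln t * t powr x\<bar> \<le> h^2 * (ln t)^2 * t powr (x/2)"
proof -
  define L where "L = ln t"
  have L: "L < 0" using t by (simp add: L_def)
  have e: "t powr (x + h) = t powr x * exp (h * L)"
    using t by (simp add: powr_def L_def exp_add[symmetric] algebra_simps)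
  have "\<bar>t powr (x + h) - t powr x - h * ln t * t powr x\<bar> = t powr x * \<bar>exp (h*L) - 1 - h*L\<bar>"
  proof -
    have "t powr (x + h) - t powr x - h * ln t * t powr x = t powr x * (exp (h*L) - 1 - h*L)"
      unfolding e by (simp add: algebra_simps L_def)
    thus ?thesis by (simp add: abs_mult)
  qed
  also have "\<dots> \<le> t powr x * ((h*L)^2 * exp \<bar>h*L\<bar> / 2)"
    by (intro mult_left_mono exp_taylor2_bound) auto
  also have "exp \<bar>h*L\<bar> = t powr (- \<bar>h\<bar>)"
    using t L by (simp add: powr_def L_def abs_mult)
  also have "t powr x * ((h*L)^2 * t powr (- \<bar>h\<bar>) / 2) = (h*L)^2 * t powr (x - \<bar>h\<bar>) / 2"
    by (simp add: powr_diff powr_minus field_simps)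
  also have "\<dots> \<le> (h*L)^2 * t powr (x/2)"
  proof -
    have "t powr (x - \<bar>h\<bar>) \<le> t powr (x/2)" using t h by (intro powr_mono') auto
    moreover have "0 \<le> (h*L)^2" by simp
    moreover have "0 \<le> t powr (x - \<bar>h\<bar>)" by simp
    ultimately have "(h*L)^2 * t powr (x - \<bar>h\<bar>) \<le> (h*L)^2 * t powr (x/2)"
      by (intro mult_left_mono) auto
    moreover have "0 \<le> (h*L)^2 * t powr (x - \<bar>h\<bar>)" by simp
    ultimately show ?thesis by linarith
  qed
  finally show ?thesis by (simp add: L_def power_mult_distrib)
qed

definition Iw :: "(real \<Rightarrow> real) \<Rightarrow> nat \<Rightarrow> real \<Rightarrow> real" where
  "Iw w n x = integral {0<..<1} (\<lambda>t. t powr x * ln t ^ n * w t)"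

definition goodw :: "(real \<Rightarrow> real) \<Rightarrow> bool" where
  "goodw w \<longleftrightarrow> (\<forall>a>0. \<forall>m. (\<lambda>t. t powr a * ln t ^ m * w t) absolutely_integrable_on {0<..<1})"

lemma goodw_integrable:
  assumes "goodw w" "a > 0"
  shows "(\<lambda>t. t powr a * ln t ^ m * w t) integrable_on {0<..<1}"
    "(\<lambda>t. \<bar>t powr a * ln t ^ m * w t\<bar>) integrable_on {0<..<1}"
  using assms unfolding goodw_def absolutely_integrable_on_def by auto

lemma Iw_key_bound:
  assumes w: "goodw w" and x: "x > 0" and h: "\<bar>h\<bar> \<le> x / 2"
  shows "\<bar>Iw w n (x + h) - Iw w n x - h * Iw w (Suc n) x\<bar>
          \<le> h^2 * integral {0<..<1} (\<lambda>t. \<bar>t powr (x/2) * ln t ^ (n+2) * w t\<bar>)"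
proof -
  let ?S = "{0<..<1::real}"
  have xh: "x + h > 0" using x h by linarith
  have i1: "(\<lambda>t. t powr (x+h) * ln t ^ n * w t) integrable_on ?S"
    using goodw_integrable[OF w xh] by blast
  have i2: "(\<lambda>t. t powr x * ln t ^ n * w t) integrable_on ?S"
    using goodw_integrable[OF w x] by blast
  have i3: "(\<lambda>t. h * (t powr x * ln t ^ Suc n * w t)) integrable_on ?S"
    using goodw_integrable(1)[OF w x, of "Suc n"] by (rule integrable_on_mult_right)
  have i4: "(\<lambda>t. h^2 * \<bar>t powr (x/2) * ln t ^ (n+2) * w t\<bar>) integrable_on ?S"
    using goodw_integrable(2)[of w "x/2" "n+2"] w x by (intro integrable_on_mult_right) auto
  have E1: "Iw w n (x + h) - Iw w n x - h * Iw w (Suc n) x =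
        integral ?S (\<lambda>t. t powr (x+h) * ln t ^ n * w t - t powr x * ln t ^ n * w t
                          - h * (t powr x * ln t ^ Suc n * w t))"
    unfolding Iw_def
    by (subst integral_diff[OF integrable_diff[OF i1 i2] i3], subst integral_diff[OF i1 i2])
       (simp add: integral_mult_right)
  have E2: "\<bar>integral ?S (\<lambda>t. t powr (x+h) * ln t ^ n * w t - t powr x * ln t ^ n * w t
                          - h * (t powr x * ln t ^ Suc n * w t))\<bar> \<le> integral ?S (\<lambda>t. h^2 * \<bar>t powr (x/2) * ln t ^ (n+2) * w t\<bar>)"
  proof -
    have A: "(\<lambda>t. t powr (x+h) * ln t ^ n * w t - t powr x * ln t ^ n * w t
                          - h * (t powr x * ln t ^ Suc n * w t)) integrable_on ?S"
      by (intro integrable_diff i1 i2 i3)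
    have C: "norm (t powr (x+h) * ln t ^ n * w t - t powr x * ln t ^ n * w t
              - h * (t powr x * ln t ^ Suc n * w t)) \<le> h^2 * \<bar>t powr (x/2) * ln t ^ (n+2) * w t\<bar>"
      if t: "t \<in> ?S" for t
    proof -
    have "t powr (x+h) * ln t ^ n * w t - t powr x * ln t ^ n * w t
              - h * (t powr x * ln t ^ Suc n * w t)
          = (ln t ^ n * w t) * (t powr (x + h) - t powr x - h * ln t * t powr x)"
      by (simp add: algebra_simps)
    hence "\<bar>t powr (x+h) * ln t ^ n * w t - t powr x * ln t ^ n * w t
              - h * (t powr x * ln t ^ Suc n * w t)\<bar>
          = \<bar>ln t ^ n * w t\<bar> * \<bar>t powr (x + h) - t powr x - h * ln t * t powr x\<bar>"
      by (simp add: abs_mult)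
    also have "\<dots> \<le> \<bar>ln t ^ n * w t\<bar> * (h^2 * (ln t)^2 * t powr (x/2))"
      using t x h by (intro mult_left_mono powr_taylor_bound) auto
    also have "\<dots> = h^2 * \<bar>t powr (x/2) * ln t ^ (n+2) * w t\<bar>"
      by (simp add: abs_mult power_add algebra_simps power2_eq_square)
    finally show ?thesis by simp
    qed
    show ?thesis using integral_norm_bound_integral[OF A i4 C] by simp
  qed
  have E3: "integral ?S (\<lambda>t. h^2 * \<bar>t powr (x/2) * ln t ^ (n+2) * w t\<bar>) = h^2 * integral {0<..<1} (\<lambda>t. \<bar>t powr (x/2) * ln t ^ (n+2) * w t\<bar>)"
    by (simp add: integral_mult_right)
  show ?thesis unfolding E1 E3[symmetric] by (rule E2)
qed

lemma Iw_deriv: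
  assumes w: "goodw w" and x: "x > 0"
  shows "(Iw w n has_real_derivative Iw w (Suc n) x) (at x)"
proof -
  define K where "K = integral {0<..<1} (\<lambda>t. \<bar>t powr (x/2) * ln t ^ (n+2) * w t\<bar>)"
  have ev: "\<forall>\<^sub>F h in at 0. norm ((Iw w n (x + h) - Iw w n x) / h - Iw w (Suc n) x) \<le> \<bar>h\<bar> * K"
    unfolding eventually_at
  proof (intro exI[of _ "x/2"] conjI allI impI ballI)
    show "x/2 > 0" using x by simp
    fix h :: real assume h: "h \<noteq> 0 \<and> dist h 0 < x / 2"
    hence h': "\<bar>h\<bar> \<le> x/2" by simp
    have "(Iw w n (x + h) - Iw w n x) / h - Iw w (Suc n) x
           = (Iw w n (x + h) - Iw w n x - h * Iw w (Suc n) x) / h"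
      using h by (simp add: field_simps)
    hence "norm ((Iw w n (x + h) - Iw w n x) / h - Iw w (Suc n) x)
           = \<bar>Iw w n (x + h) - Iw w n x - h * Iw w (Suc n) x\<bar> / \<bar>h\<bar>"
      by simp
    also have "\<dots> \<le> h^2 * K / \<bar>h\<bar>"
      using Iw_key_bound[OF w x h', of n] h by (intro divide_right_mono) (auto simp: K_def)
    also have "\<dots> = \<bar>h\<bar> * K" using h by (simp add: power2_eq_square field_simps)
    finally show "norm ((Iw w n (x + h) - Iw w n x) / h - Iw w (Suc n) x) \<le> \<bar>h\<bar> * K" .
  qed
  have "((\<lambda>h. \<bar>h\<bar> * K) \<longlongrightarrow> 0) (at (0::real))"
  proof -
    have "((\<lambda>h. \<bar>h\<bar> * K) \<longlongrightarrow> \<bar>0\<bar> * K) (at (0::real))"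
      by (intro tendsto_intros)
    thus ?thesis by simp
  qed
  from Lim_null_comparison[OF ev this]
  have "((\<lambda>h. (Iw w n (x + h) - Iw w n x) / h) \<longlongrightarrow> Iw w (Suc n) x) (at 0)"
    by (rule LIM_zero_cancel)
  thus ?thesis by (simp add: DERIV_def)
qed

lemma logpow_bound:
  fixes t a :: real
  assumes t: "0 < t" "t < 1" and a: "a > 0"
  shows "t powr a * \<bar>ln t\<bar> ^ m \<le> (real m / a) ^ m"
proof (cases "m = 0")
  case True
  have "t powr a \<le> t powr 0" using t a by (intro powr_mono') auto
  thus ?thesis using True t by simp
next
  case False
  define c where "c = a / real m"
  have c: "c > 0" using False a by (simp add: c_def)
  have "ln (t powr (-c)) \<le> t powr (-c) - 1" using t by (intro ln_le_minus_one) auto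
  hence "- c * ln t \<le> t powr (-c)" using t by (simp add: ln_powr)
  hence l: "\<bar>ln t\<bar> \<le> t powr (-c) / c" using t c by (simp add: field_simps abs_if)
  have "\<bar>ln t\<bar> ^ m \<le> (t powr (-c) / c) ^ m" by (intro power_mono l) auto
  also have "\<dots> = (t powr (-c)) powr (real m) / c ^ m"
    using t by (simp add: power_divide powr_realpow)
  also have "\<dots> = t powr (- a) / c ^ m" using False by (simp add: powr_powr c_def)
  finally have "t powr a * \<bar>ln t\<bar> ^ m \<le> t powr a * (t powr (- a) / c ^ m)"
    by (intro mult_left_mono) auto
  also have "\<dots> = 1 / c ^ m" using t by (simp add: powr_minus field_simps)
  also have "\<dots> = (real m / a) ^ m" using c by (simp add: c_def power_divide)
  finally show ?thesis .
qed

lemma int_w1: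
  assumes mu: "mu > (0::real)"
  shows "(\<lambda>t. (1 - t) powr (mu - 1)) integrable_on {0<..<1}"
proof -
  have "((\<lambda>t. t powr (1 - 1) * (1 - t) powr (mu - 1)) has_integral Beta 1 mu) {0<..<1}"
    using has_integral_Beta_real[of 1 mu] mu by (simp add: has_integral_Icc_iff_Ioo)
  hence "((\<lambda>t. (1 - t) powr (mu - 1)) has_integral Beta 1 mu) {0<..<1}"
    by (rule has_integral_cong[THEN iffD1, rotated]) auto
  thus ?thesis by blast
qed

lemma abs_int_from_bound:
  fixes f :: "real \<Rightarrow> real"
  assumes mu: "mu > 0" and cont: "continuous_on {0<..<1} f"
    and bd: "\<And>t. t \<in> {0<..<1} \<Longrightarrow> \<bar>f t\<bar> \<le> C * (1 - t) powr (mu - 1)"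
  shows "f absolutely_integrable_on {0<..<1}"
proof (rule measurable_bounded_by_integrable_imp_absolutely_integrable)
  show "f \<in> borel_measurable (lebesgue_on {0<..<1})"
    by (rule continuous_imp_measurable_on_sets_lebesgue[OF cont]) auto
  show "(\<lambda>t. C * (1 - t) powr (mu - 1)) integrable_on {0<..<1}"
    using int_w1[OF mu] by (rule integrable_on_mult_right)
qed (use bd in auto)

definition w1 :: "real \<Rightarrow> real \<Rightarrow> real" where
  "w1 mu t = (1 - t) powr (mu - 1)"

definition Vw :: "real \<Rightarrow> real \<Rightarrow> real" where
  "Vw mu t = (1 - t) powr (mu - 2) * ((mu - 1) * (1 - t) - ln t * (1 - mu * t))"

lemma goodw_w1:
  assumes mu: "mu > 0"
  shows "goodw (w1 mu)"
  unfolding goodw_def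
proof (intro allI impI)
  fix a :: real and m :: nat assume a: "a > 0"
  show "(\<lambda>t. t powr a * ln t ^ m * w1 mu t) absolutely_integrable_on {0<..<1}"
  proof (rule abs_int_from_bound[OF mu, of _ "(real m / a) ^ m"])
    show "continuous_on {0<..<1} (\<lambda>t. t powr a * ln t ^ m * w1 mu t)"
      unfolding w1_def by (intro continuous_intros) auto
    fix t :: real assume t: "t \<in> {0<..<1}"
    have "\<bar>t powr a * ln t ^ m * w1 mu t\<bar> = (t powr a * \<bar>ln t\<bar> ^ m) * (1 - t) powr (mu - 1)"
      by (simp add: w1_def abs_mult power_abs)
    also have "\<dots> \<le> (real m / a) ^ m * (1 - t) powr (mu - 1)"
      using t a by (intro mult_right_mono logpow_bound) auto
    finally show "\<bar>t powr a * ln t ^ m * w1 mu t\<bar> \<le> (real m / a) ^ m * (1 - t) powr (mu - 1)" .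
  qed
qed

lemma tlog_bound:
  assumes t: "0 < t" "t < (1::real)"
  shows "\<bar>t * ln t\<bar> \<le> 1 - t" "ln t < 0"
proof -
  have "ln (1/t) \<le> 1/t - 1" using t by (intro ln_le_minus_one) auto
  hence "- ln t \<le> 1/t - 1" using t by (simp add: ln_div)
  hence "- t * ln t \<le> 1 - t" using t by (simp add: field_simps)
  moreover have l: "ln t < 0" using t by simp
  moreover have "t * ln t < 0" using t l by (simp add: mult_pos_neg)
  ultimately show "\<bar>t * ln t\<bar> \<le> 1 - t" by linarith
  show "ln t < 0" by (rule l)
qed

lemma Vw_bound:
  assumes t: "0 < t" "t < 1"
  shows "\<bar>Vw mu t\<bar> \<le> (1 - t) powr (mu - 1) * (2 * \<bar>mu - 1\<bar> + \<bar>ln t\<bar>)"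
proof -
  define p where "p = (mu - 1) * (1 - t) - ln t * (1 - mu * t)"
  have pe: "p = (mu - 1) * (1 - t) - ln t * (1 - t) - (1 - mu) * (t * ln t)"
    by (simp add: p_def algebra_simps)
  have "\<bar>p\<bar> \<le> \<bar>mu - 1\<bar> * (1 - t) + \<bar>ln t\<bar> * (1 - t) + \<bar>1 - mu\<bar> * \<bar>t * ln t\<bar>"
  proof -
    have tri: "\<bar>A - B - C\<bar> \<le> \<bar>A\<bar> + \<bar>B\<bar> + \<bar>C\<bar>" for A B C :: real by arith
    show ?thesis unfolding pe using tri[of "(mu - 1) * (1 - t)" "ln t * (1 - t)" "(1 - mu) * (t * ln t)"] t
      by (simp add: abs_mult)
  qed
  also have "\<dots> \<le> \<bar>mu - 1\<bar> * (1 - t) + \<bar>ln t\<bar> * (1 - t) + \<bar>1 - mu\<bar> * (1 - t)"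
    using tlog_bound[OF t] by (intro add_left_mono mult_left_mono) auto
  also have "\<dots> = (1 - t) * (2 * \<bar>mu - 1\<bar> + \<bar>ln t\<bar>)" by (simp add: algebra_simps abs_minus_commute)
  finally have pb: "\<bar>p\<bar> \<le> (1 - t) * (2 * \<bar>mu - 1\<bar> + \<bar>ln t\<bar>)" .
  have e: "(1 - t) powr (mu - 2) = (1 - t) powr (mu - 1) / (1 - t)"
  proof -
    have "(1 - t) powr (mu - 1) = (1 - t) powr (mu - 2 + 1)" by simp
    also have "\<dots> = (1 - t) powr (mu - 2) * (1 - t)" by (subst powr_add) (use t in simp)
    finally show ?thesis using t by simp
  qed
  have "\<bar>Vw mu t\<bar> = (1 - t) powr (mu - 1) * (\<bar>p\<bar> / (1 - t))"
    using t by (simp add: Vw_def p_def[symmetric] e abs_mult)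
  also have "\<dots> \<le> (1 - t) powr (mu - 1) * (2 * \<bar>mu - 1\<bar> + \<bar>ln t\<bar>)"
    using pb t by (intro mult_left_mono) (auto simp: field_simps)
  finally show ?thesis .
qed

lemma goodw_Vw:
  assumes mu: "mu > 0"
  shows "goodw (Vw mu)"
  unfolding goodw_def
proof (intro allI impI)
  fix a :: real and m :: nat assume a: "a > 0"
  show "(\<lambda>t. t powr a * ln t ^ m * Vw mu t) absolutely_integrable_on {0<..<1}"
  proof (rule abs_int_from_bound[OF mu])
    show "continuous_on {0<..<1} (\<lambda>t. t powr a * ln t ^ m * Vw mu t)"
      unfolding Vw_def by (intro continuous_intros) auto
    fix t :: real assume t: "t \<in> {0<..<1}"
    have b1: "t powr a * \<bar>ln t\<bar> ^ m \<le> (real m / a) ^ m" using t a by (intro logpow_bound) auto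
    have b2: "t powr a * \<bar>ln t\<bar> ^ (m+1) \<le> (real (m+1) / a) ^ (m+1)" using t a by (intro logpow_bound) auto
    have "\<bar>t powr a * ln t ^ m * Vw mu t\<bar> = (t powr a * \<bar>ln t\<bar> ^ m) * \<bar>Vw mu t\<bar>"
      by (simp add: abs_mult power_abs)
    also have "\<dots> \<le> (t powr a * \<bar>ln t\<bar> ^ m) * ((1 - t) powr (mu - 1) * (2 * \<bar>mu - 1\<bar> + \<bar>ln t\<bar>))"
      using t by (intro mult_left_mono Vw_bound) auto
    also have "\<dots> = (1 - t) powr (mu - 1) * (2 * \<bar>mu - 1\<bar> * (t powr a * \<bar>ln t\<bar> ^ m) + t powr a * \<bar>ln t\<bar> ^ (m+1))"
      by (simp add: algebra_simps)
    also have "\<dots> \<le> (1 - t) powr (mu - 1) * (2 * \<bar>mu - 1\<bar> * (real m / a) ^ m + (real (m+1) / a) ^ (m+1))"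
      using b1 b2 by (intro mult_left_mono add_mono) auto
    finally show "\<bar>t powr a * ln t ^ m * Vw mu t\<bar> \<le> (2 * \<bar>mu - 1\<bar> * (real m / a) ^ m + (real (m+1) / a) ^ (m+1)) * (1 - t) powr (mu - 1)"
      by (simp add: mult_ac)
  qed
qed

lemma Vw_nonneg:
  assumes t: "0 < t" "t < 1" and mu: "mu > 0"
  shows "Vw mu t \<ge> 0"
proof -
  define p where "p s = (mu - 1) * (1 - s) - ln s * (1 - mu * s)" for s
  have "p 1 \<le> p t"
  proof (rule DERIV_nonpos_imp_nonincreasing[of t 1 p])
    show "t \<le> 1" using t by simp
    fix s assume s: "t \<le> s" "s \<le> 1"
    have "(p has_real_derivative (- (mu - 1) - (1/s * (1 - mu * s) + ln s * (- mu)))) (at s)"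
      unfolding p_def using s t by (auto intro!: derivative_eq_intros)
    moreover have "- (mu - 1) - (1/s * (1 - mu * s) + ln s * (- mu)) = 1 - 1/s + mu * ln s"
      using s t by (simp add: field_simps)
    ultimately have D: "(p has_real_derivative (1 - 1/s + mu * ln s)) (at s)" by (metis (no_types))
    moreover have "1 - 1/s + mu * ln s \<le> 0"
    proof -
      have "1/s \<ge> 1" using s t by simp
      moreover have "ln s \<le> 0" using s t by simp
      moreover have "mu * ln s \<le> 0" using mu \<open>ln s \<le> 0\<close> by (intro mult_nonneg_nonpos) auto
      ultimately show ?thesis by linarith
    qed
    ultimately show "\<exists>y. (p has_real_derivative y) (at s) \<and> y \<le> 0" by auto
  qed
  hence "p t \<ge> 0" by (simp add: p_def)
  thus ?thesis unfolding Vw_def p_def using t by simp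
qed

lemma Iw_w1_beta:
  assumes mu: "mu > 0" and x: "x > 0"
  shows "Iw (w1 mu) 0 x = Beta (x + 1) mu"
proof -
  have "((\<lambda>t. t powr (x + 1 - 1) * (1 - t) powr (mu - 1)) has_integral Beta (x + 1) mu) {0<..<1}"
    using has_integral_Beta_real[of "x+1" mu] mu x by (simp add: has_integral_Icc_iff_Ioo)
  hence "((\<lambda>t. t powr x * ln t ^ 0 * w1 mu t) has_integral Beta (x + 1) mu) {0<..<1}"
    by (simp add: w1_def)
  thus ?thesis unfolding Iw_def by (rule integral_unique)
qed

definition Gf :: "real \<Rightarrow> real \<Rightarrow> real \<Rightarrow> real" where
  "Gf mu x t = t powr (x + 1) * ln t * (1 - t) powr (mu - 1)"

definition Gd :: "real \<Rightarrow> real \<Rightarrow> real \<Rightarrow> real" where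
  "Gd mu x t = (x + 1) * t powr x * ln t * (1 - t) powr (mu - 1) + t powr x * (1 - t) powr (mu - 1)
               - (mu - 1) * t powr (x + 1) * ln t * (1 - t) powr (mu - 2)"

lemma Gf_deriv:
  assumes t: "0 < t" "t < 1"
  shows "(Gf mu x has_real_derivative Gd mu x t) (at t)"
proof -
  have "(Gf mu x has_real_derivative
          ((x + 1) * t powr (x + 1 - 1) * ln t + t powr (x + 1) * (1 / t)) * (1 - t) powr (mu - 1)
          + t powr (x + 1) * ln t * ((mu - 1) * (1 - t) powr (mu - 1 - 1) * (- 1))) (at t)"
    unfolding Gf_def using t
    by (intro derivative_eq_intros DERIV_powr has_real_derivative_powr refl) auto
  moreover have "((x + 1) * t powr (x + 1 - 1) * ln t + t powr (x + 1) * (1 / t)) * (1 - t) powr (mu - 1)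
          + t powr (x + 1) * ln t * ((mu - 1) * (1 - t) powr (mu - 1 - 1) * (- 1)) = Gd mu x t"
  proof -
    have "t powr (x + 1) * (1 / t) = t powr x" using t by (simp add: powr_add)
    moreover have "mu - 1 - 1 = mu - 2" by simp
    ultimately show ?thesis unfolding Gd_def by (simp add: algebra_simps)
  qed
  ultimately show ?thesis by (metis (no_types))
qed

lemma Gf_cont:
  assumes mu: "mu > 0" and x: "x > 0"
  shows "continuous_on {0..1} (Gf mu x)"
  unfolding continuous_on_eq_continuous_within
proof
  fix t :: real assume t: "t \<in> {0..1}"
  consider "t = 0" | "t = 1" | "0 < t \<and> t < 1" using t by force
  thus "continuous (at t within {0..1}) (Gf mu x)"
  proof cases
    case 1
    have b: "\<forall>\<^sub>F s in at 0 within {0..1}. norm (s powr (x + 1) * ln s) \<le> s / x"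
      unfolding eventually_at
    proof (intro exI[of _ 1] conjI ballI impI)
      fix s :: real assume s: "s \<in> {0..1}" "s \<noteq> 0 \<and> dist s 0 < 1"
      hence s': "0 < s" "s < 1" by auto
      have "norm (s powr (x + 1) * ln s) = s * (s powr x * \<bar>ln s\<bar> ^ 1)"
        using s' by (simp add: powr_add abs_mult)
      also have "\<dots> \<le> s * (real 1 / x) ^ 1"
        using s' x by (intro mult_left_mono logpow_bound) auto
      finally show "norm (s powr (x + 1) * ln s) \<le> s / x" using x by simp
    qed simp
    have "((\<lambda>s. s / x) \<longlongrightarrow> 0 / x) (at 0 within {0..1})" using x by (intro tendsto_intros) auto
    hence l1: "((\<lambda>s. s powr (x + 1) * ln s) \<longlongrightarrow> 0) (at 0 within {0..1})"
      using Lim_null_comparison[OF b] by simp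
    have l2: "((\<lambda>s. (1 - s) powr (mu - 1)) \<longlongrightarrow> (1 - 0) powr (mu - 1)) (at 0 within {0..1})"
      by (intro tendsto_intros) auto
    have "((\<lambda>s. s powr (x + 1) * ln s * (1 - s) powr (mu - 1)) \<longlongrightarrow> 0 * (1 - 0) powr (mu - 1)) (at 0 within {0..1})"
      by (intro tendsto_mult l1 l2)
    thus ?thesis using 1 by (simp add: continuous_within Gf_def[abs_def])
  next
    case 2
    have b: "\<forall>\<^sub>F s in at 1 within {0..1}. norm (Gf mu x s) \<le> (1 - s) powr mu"
      unfolding eventually_at
    proof (intro exI[of _ 1] conjI ballI impI)
      fix s :: real assume s: "s \<in> {0..1}" "s \<noteq> 1 \<and> dist s 1 < 1"
      hence s': "0 < s" "s < 1" by (auto simp: dist_real_def)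
      have "norm (Gf mu x s) = s powr x * \<bar>s * ln s\<bar> * (1 - s) powr (mu - 1)"
        using s' by (simp add: Gf_def powr_add abs_mult)
      also have "\<dots> \<le> 1 * (1 - s) * (1 - s) powr (mu - 1)"
      proof (intro mult_right_mono mult_mono)
        show "s powr x \<le> 1" using s' x powr_mono'[of 0 x s] by simp
      qed (use tlog_bound[OF s'] in auto)
      also have "\<dots> = (1 - s) powr mu"
        using s' by (simp add: powr_diff)
      finally show "norm (Gf mu x s) \<le> (1 - s) powr mu" .
    qed simp
    have "((\<lambda>s. (1 - s) powr mu) \<longlongrightarrow> 0) (at 1 within {0..1})"
    proof (rule tendsto_zero_powrI)
      have "((\<lambda>s::real. 1 - s) \<longlongrightarrow> 1 - 1) (at 1 within {0..1})" by (rule tendsto_diff[OF tendsto_const tendsto_ident_at])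
      thus "((\<lambda>s. 1 - s) \<longlongrightarrow> (0::real)) (at 1 within {0..1})" by simp
      show "\<forall>\<^sub>F s in at 1 within {0..1}. 0 \<le> 1 - (s::real)"
        by (auto simp: eventually_at_filter)
    qed (use mu in auto)
    from Lim_null_comparison[OF b this]
    show ?thesis using 2 by (simp add: continuous_within Gf_def[abs_def])
  next
    case 3
    hence "isCont (Gf mu x) t" unfolding Gf_def by (intro continuous_intros) auto
    thus ?thesis by (rule continuous_at_imp_continuous_at_within)
  qed
qed

lemma Iw_IBP:
  assumes mu: "mu > 0" and x: "x > 0"
  shows "Iw (Vw mu) 0 x = mu * Iw (w1 mu) 0 x + x * Iw (w1 mu) 1 x"
proof -
  let ?S = "{0<..<1::real}"
  have "(Gd mu x has_integral (Gf mu x 1 - Gf mu x 0)) {0..1}"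
    by (rule fundamental_theorem_of_calculus_interior)
       (use Gf_cont[OF mu x] Gf_deriv in \<open>auto simp: has_real_derivative_iff_has_vector_derivative[symmetric]\<close>)
  hence G: "(Gd mu x has_integral 0) ?S" by (simp add: Gf_def has_integral_Icc_iff_Ioo)
  have f0: "((\<lambda>t. t powr x * ln t ^ 0 * w1 mu t) has_integral Iw (w1 mu) 0 x) ?S"
    unfolding Iw_def by (rule integrable_integral, rule goodw_integrable[OF goodw_w1[OF mu] x])
  have f1: "((\<lambda>t. t powr x * ln t ^ 1 * w1 mu t) has_integral Iw (w1 mu) 1 x) ?S"
    unfolding Iw_def by (rule integrable_integral, rule goodw_integrable[OF goodw_w1[OF mu] x])
  have "((\<lambda>t. mu * (t powr x * ln t ^ 0 * w1 mu t) + x * (t powr x * ln t ^ 1 * w1 mu t) - Gd mu x t)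
          has_integral (mu * Iw (w1 mu) 0 x + x * Iw (w1 mu) 1 x - 0)) ?S"
    by (intro has_integral_diff has_integral_add has_integral_mult_right f0 f1 G)
  moreover have "mu * (t powr x * ln t ^ 0 * w1 mu t) + x * (t powr x * ln t ^ 1 * w1 mu t) - Gd mu x t
          = t powr x * ln t ^ 0 * Vw mu t" if t: "t \<in> ?S" for t
  proof -
    define P where "P = t powr x"
    define Q where "Q = (1 - t) powr (mu - 2)"
    have e1: "t powr (x + 1) = P * t" using t by (simp add: P_def powr_add)
    have e2: "(1 - t) powr (mu - 1) = Q * (1 - t)"
    proof -
      have "(1 - t) powr (mu - 1) = (1 - t) powr (mu - 2 + 1)" by simp
      also have "\<dots> = Q * (1 - t)" unfolding Q_def by (subst powr_add) (use t in simp)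
      finally show ?thesis .
    qed
    show ?thesis
      unfolding Gd_def w1_def Vw_def e1 e2 P_def[symmetric] Q_def[symmetric]
      by (simp add: algebra_simps)
  qed
  ultimately have "((\<lambda>t. t powr x * ln t ^ 0 * Vw mu t) has_integral (mu * Iw (w1 mu) 0 x + x * Iw (w1 mu) 1 x)) ?S"
    using has_integral_cong[of ?S "\<lambda>t. mu * (t powr x * ln t ^ 0 * w1 mu t) + x * (t powr x * ln t ^ 1 * w1 mu t) - Gd mu x t"
        "\<lambda>t. t powr x * ln t ^ 0 * Vw mu t"] by simp
  thus ?thesis unfolding Iw_def by (rule integral_unique)
qed

lemma smooth_from_holo:
  fixes F :: "complex \<Rightarrow> complex" and f :: "real \<Rightarrow> real"
  assumes holo: "F holomorphic_on S" and S: "open S"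
    and inS: "\<And>x. x \<in> A \<Longrightarrow> complex_of_real x \<in> S"
    and eq: "\<And>x. x \<in> A \<Longrightarrow> F (of_real x) = of_real (f x)"
  shows "smooth_on f A"
  unfolding smooth_on_def has_derivs_on_def
proof (intro exI[of _ "\<lambda>n x. Re ((deriv ^^ n) F (of_real x))"] conjI allI ballI)
  fix x assume x: "x \<in> A"
  show "Re ((deriv ^^ 0) F (of_real x)) = f x" using eq[OF x] by simp
next
  fix n x assume x: "x \<in> A"
  have "(deriv ^^ n) F holomorphic_on S" by (rule holomorphic_higher_deriv[OF holo S])
  hence "(deriv ^^ n) F field_differentiable (at (of_real x))"
    using S inS[OF x] by (rule holomorphic_on_imp_differentiable_at)
  hence "((deriv ^^ n) F has_field_derivative (deriv ^^ Suc n) F (of_real x)) (at (of_real x))"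
    by (simp add: DERIV_deriv_iff_field_differentiable)
  hence "((\<lambda>y. (deriv ^^ n) F (of_real y)) has_vector_derivative (deriv ^^ Suc n) F (of_real x)) (at x)"
    by (rule has_vector_derivative_real_field)
  hence "((\<lambda>y. (deriv ^^ n) F (of_real y)) has_derivative (\<lambda>h. h *\<^sub>R (deriv ^^ Suc n) F (of_real x))) (at x)"
    by (simp add: has_vector_derivative_def)
  hence "((\<lambda>y. Re ((deriv ^^ n) F (of_real y))) has_derivative (\<lambda>h. Re (h *\<^sub>R (deriv ^^ Suc n) F (of_real x)))) (at x)"
    by (rule has_derivative_Re)
  hence "((\<lambda>y. Re ((deriv ^^ n) F (of_real y))) has_derivative (\<lambda>h. h * Re ((deriv ^^ Suc n) F (of_real x)))) (at x)"
    by simp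
  moreover have "(\<lambda>h. h * Re ((deriv ^^ Suc n) F (of_real x))) = (*) (Re ((deriv ^^ Suc n) F (of_real x)))"
    by (auto simp: fun_eq_iff)
  ultimately show "((\<lambda>y. Re ((deriv ^^ n) F (of_real y))) has_real_derivative Re ((deriv ^^ Suc n) F (of_real x))) (at x)"
    unfolding has_field_derivative_def by simp
qed

lemma g_smooth:
  assumes lam: "lam > 1"
  shows "smooth_on (g_lambda lam) {0<..}"
proof (rule smooth_from_holo[where S = "{z. 0 < Re z}"
          and F = "\<lambda>z. z powr (of_real lam) * Gamma z * rGamma (of_real lam + z)"])
  show "open {z. 0 < Re z}" by (simp add: open_halfspace_Re_gt)
  show "(\<lambda>z. z powr (of_real lam) * Gamma z * rGamma (of_real lam + z)) holomorphic_on {z. 0 < Re z}"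
  proof (intro holomorphic_intros)
    fix z :: complex assume "z \<in> {z. 0 < Re z}"
    thus "z \<notin> \<real>\<^sub>\<le>\<^sub>0" by (auto simp: complex_nonpos_Reals_iff)
  next
    show "{z. 0 < Re z} \<inter> \<int>\<^sub>\<le>\<^sub>0 = {}"
      by (auto elim!: nonpos_Ints_cases)
  qed
  fix x :: real assume x: "x \<in> {0<..}"
  show "complex_of_real x \<in> {z. 0 < Re z}" using x by simp
  have e1: "(of_real x :: complex) powr (of_real lam) = of_real (x powr lam)"
    using x by (simp add: powr_of_real)
  have e3: "rGamma (of_real lam + of_real x :: complex) = of_real (rGamma (lam + x))"
    by (metis of_real_add rGamma_complex_of_real)
  show "complex_of_real x powr complex_of_real lam * Gamma (complex_of_real x) *
          rGamma (complex_of_real lam + complex_of_real x) = complex_of_real (g_lambda lam x)"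
    unfolding e1 e3 Gamma_complex_of_real
    by (simp add: g_lambda_def rGamma_inverse_Gamma divide_inverse)
qed

lemma g_eq:
  assumes lam: "lam > 1" and x: "x > 0"
  shows "g_lambda lam x = x powr (lam - 1) * (Iw (w1 (lam - 1)) 0 x / Gamma (lam - 1))"
proof -
  have mu: "lam - 1 > 0" using lam by simp
  have "Iw (w1 (lam - 1)) 0 x / Gamma (lam - 1) = Gamma (x + 1) / Gamma (x + lam)"
    using Gamma_real_pos[OF mu] by (simp add: Iw_w1_beta[OF mu x] Beta_def)
  also have "Gamma (x + 1) = x * Gamma x"
    using x by (intro Gamma_plus1) (auto elim!: nonpos_Ints_cases)
  finally have e: "Iw (w1 (lam - 1)) 0 x / Gamma (lam - 1) = x * Gamma x / Gamma (x + lam)" .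
  have p: "x powr lam = x powr (lam - 1) * x"
  proof -
    have "x powr lam = x powr (lam - 1 + 1)" by simp
    also have "\<dots> = x powr (lam - 1) * x" by (subst powr_add) (use x in simp)
    finally show ?thesis .
  qed
  show ?thesis unfolding e g_lambda_def p by (simp add: add.commute mult.assoc)
qed

definition gd :: "real \<Rightarrow> real \<Rightarrow> real" where
  "gd lam x = (lam - 1) * x powr (lam - 1 - 1) * (Iw (w1 (lam - 1)) 0 x / Gamma (lam - 1))
              + x powr (lam - 1) * (Iw (w1 (lam - 1)) 1 x / Gamma (lam - 1))"

lemma g_deriv:
  assumes lam: "lam > 1" and x: "x > 0"
  shows "(g_lambda lam has_real_derivative gd lam x) (at x)"
proof -
  have mu: "lam - 1 > 0" using lam by simp
  have "((\<lambda>y. y powr (lam - 1) * (Iw (w1 (lam - 1)) 0 y / Gamma (lam - 1))) has_real_derivative gd lam x) (at x)"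
    unfolding gd_def
    by (rule DERIV_cong, rule DERIV_mult[OF has_real_derivative_powr[OF x] DERIV_cdivide[OF Iw_deriv[OF goodw_w1[OF mu] x]]])
       simp
  thus ?thesis
    by (rule has_field_derivative_transform_within_open[of _ _ _ "{0<..}"]) (use x g_eq[OF lam] in auto)
qed

lemma deriv_g: "lam > 1 \<Longrightarrow> x > 0 \<Longrightarrow> deriv (g_lambda lam) x = gd lam x"
  by (rule DERIV_imp_deriv, rule g_deriv)

lemma h_eq:
  assumes lam: "lam > 1" and x: "x > 0"
  shows "deriv (g_lambda lam) x * x powr (1 - (lam - 1)) = Iw (Vw (lam - 1)) 0 x / Gamma (lam - 1)"
proof -
  have mu: "lam - 1 > 0" using lam by simp
  have a: "x powr (lam - 1 - 1) * x powr (1 - (lam - 1)) = 1"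
    using x by (simp add: powr_add[symmetric])
  have b: "x powr (lam - 1) * x powr (1 - (lam - 1)) = x"
    using x by (simp add: powr_add[symmetric])
  have "deriv (g_lambda lam) x * x powr (1 - (lam - 1))
        = ((lam - 1) * Iw (w1 (lam - 1)) 0 x + x * Iw (w1 (lam - 1)) 1 x) / Gamma (lam - 1)"
  proof -
    have r: "(A * P1 * (B / G) + P2 * (C / G)) * Q = (A * (P1 * Q) * B + (P2 * Q) * C) / G"
      for A P1 B G P2 C Q :: real by (simp add: divide_inverse algebra_simps)
    show ?thesis unfolding deriv_g[OF lam x] gd_def r a b by simp
  qed
  also have "\<dots> = Iw (Vw (lam - 1)) 0 x / Gamma (lam - 1)"
    by (simp add: Iw_IBP[OF mu x])
  finally show ?thesis .
qed

lemma g_nonneg: "lam > 1 \<Longrightarrow> x > 0 \<Longrightarrow> g_lambda lam x \<ge> 0"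
  unfolding g_lambda_def by (intro divide_nonneg_pos mult_nonneg_nonneg) auto

lemma IwV_sign:
  assumes mu: "mu > 0" and x: "x > 0"
  shows "(-1) ^ n * Iw (Vw mu) n x \<ge> 0"
proof -
  have "(-1) ^ n * Iw (Vw mu) n x = integral {0<..<1} (\<lambda>t. (-1) ^ n * (t powr x * ln t ^ n * Vw mu t))"
    unfolding Iw_def by (simp add: integral_mult_right)
  also have "\<dots> \<ge> 0"
  proof (rule integral_nonneg)
    show "(\<lambda>t. (-1) ^ n * (t powr x * ln t ^ n * Vw mu t)) integrable_on {0<..<1}"
      by (rule integrable_on_mult_right, rule goodw_integrable[OF goodw_Vw[OF mu] x])
    fix t :: real assume t: "t \<in> {0<..<1}"
    have "(-1) ^ n * (t powr x * ln t ^ n * Vw mu t) = t powr x * (- ln t) ^ n * Vw mu t"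
    proof -
      have "(-1) ^ n * (t powr x * ln t ^ n * Vw mu t) = t powr x * ((-1) ^ n * ln t ^ n) * Vw mu t"
        by (simp only: mult_ac)
      thus ?thesis by (simp only: power_minus[symmetric])
    qed
    also have "\<dots> \<ge> 0"
      using t mu by (intro mult_nonneg_nonneg zero_le_power Vw_nonneg) auto
    finally show "0 \<le> (-1) ^ n * (t powr x * ln t ^ n * Vw mu t)" .
  qed
  finally show ?thesis .
qed

lemma part1:
  assumes lam: "lam > 1"
  shows "class_B (lam - 1) (g_lambda lam)"
  unfolding class_B_def
proof (intro conjI allI impI)
  have mu: "lam - 1 > 0" using lam by simp
  show "0 \<le> g_lambda lam x" if "x > 0" for x using g_nonneg[OF lam that] .
  show "smooth_on (g_lambda lam) {0<..}" by (rule g_smooth[OF lam])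
  show "completely_monotonic_on (\<lambda>x. deriv (g_lambda lam) x * x powr (1 - (lam - 1))) {0<..}"
    unfolding completely_monotonic_on_def has_derivs_on_def
  proof (intro exI[of _ "\<lambda>n x. Iw (Vw (lam - 1)) n x / Gamma (lam - 1)"] conjI allI ballI)
    fix x :: real assume x: "x \<in> {0<..}"
    show "Iw (Vw (lam - 1)) 0 x / Gamma (lam - 1) = deriv (g_lambda lam) x * x powr (1 - (lam - 1))"
      using h_eq[OF lam] x by simp
  next
    fix n and x :: real assume x: "x \<in> {0<..}"
    show "((\<lambda>x. Iw (Vw (lam - 1)) n x / Gamma (lam - 1)) has_real_derivative
            Iw (Vw (lam - 1)) (Suc n) x / Gamma (lam - 1)) (at x)"
      using x by (intro DERIV_cdivide Iw_deriv goodw_Vw mu) auto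
  next
    fix n and x :: real assume x: "x \<in> {0<..}"
    have "(-1) ^ n * Iw (Vw (lam - 1)) n x \<ge> 0" using IwV_sign[OF mu] x by auto
    thus "(-1) ^ n * (Iw (Vw (lam - 1)) n x / Gamma (lam - 1)) \<ge> 0"
      using Gamma_real_pos[OF mu] by (simp add: divide_nonneg_pos)
  qed
qed

lemma g_upper:
  assumes lam: "lam > 1" and x: "x > 0"
  shows "g_lambda lam x \<le> (Beta 1 (lam - 1) / Gamma (lam - 1)) * x powr (lam - 1)"
proof -
  have mu: "lam - 1 > 0" using lam by simp
  have "Iw (w1 (lam - 1)) 0 x = Beta (x + 1) (lam - 1)" by (rule Iw_w1_beta[OF mu x])
  also have "\<dots> \<le> Beta 1 (lam - 1)" using x mu by (intro Beta_real_mono) auto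
  finally have "Iw (w1 (lam - 1)) 0 x / Gamma (lam - 1) \<le> Beta 1 (lam - 1) / Gamma (lam - 1)"
    using Gamma_real_pos[OF mu] by (intro divide_right_mono) auto
  hence "x powr (lam - 1) * (Iw (w1 (lam - 1)) 0 x / Gamma (lam - 1))
         \<le> x powr (lam - 1) * (Beta 1 (lam - 1) / Gamma (lam - 1))"
    by (intro mult_left_mono) auto
  thus ?thesis unfolding g_eq[OF lam x] by (simp add: mult.commute)
qed

lemma part2:
  assumes lam: "lam > 1" and tau: "0 < \<tau>" "\<tau> < lam - 1"
  shows "\<not> class_B \<tau> (g_lambda lam)"
proof
  assume cb: "class_B \<tau> (g_lambda lam)"
  define mu where "mu = lam - 1"
  have mu: "mu > 0" using lam by (simp add: mu_def)
  define g where "g = g_lambda lam"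
  from cb have "completely_monotonic_on (\<lambda>x. deriv g x * x powr (1 - \<tau>)) {0<..}"
    by (simp add: class_B_def g_def)
  then obtain D where hd: "has_derivs_on (\<lambda>x. deriv g x * x powr (1 - \<tau>)) D {0<..}"
    and sg: "\<forall>n. \<forall>x\<in>{0<..}. (-1) ^ n * D n x \<ge> 0"
    unfolding completely_monotonic_on_def by blast
  have D0: "D 0 x = deriv g x * x powr (1 - \<tau>)" if "x > 0" for x
    using hd that unfolding has_derivs_on_def by simp
  have Dd: "(D n has_real_derivative D (Suc n) x) (at x)" if "x > 0" for n x
    using hd that unfolding has_derivs_on_def by simp
  have Ds: "(-1) ^ n * D n x \<ge> 0" if "x > 0" for n x
    using sg that by simp
  have gder: "(g has_real_derivative gd lam x) (at x)" "deriv g x = gd lam x" if "x > 0" for x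
    using g_deriv[OF lam that] deriv_g[OF lam that] by (simp_all add: g_def)
  have mono: "D 0 b \<le> D 0 a" if "0 < a" "a \<le> b" for a b
  proof (rule DERIV_nonpos_imp_nonincreasing[of a b "D 0"])
    show "a \<le> b" by fact
    fix y assume y: "a \<le> y" "y \<le> b"
    have "y > 0" using y that by simp
    thus "\<exists>d. (D 0 has_real_derivative d) (at y) \<and> d \<le> 0"
      using Dd[of y 0] Ds[of y 1] by auto
  qed
  define M where "M = Beta 1 mu / Gamma mu"
  have Mpos: "M > 0" unfolding M_def Beta_def by (intro divide_pos_pos mult_pos_pos Gamma_real_pos) (use mu in auto)
  have gup: "g x \<le> M * x powr mu" if "x > 0" for x
    using g_upper[OF lam that] by (simp add: g_def M_def mu_def)
  have gnn: "g x \<ge> 0" if "x > 0" for x using g_nonneg[OF lam that] by (simp add: g_def)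
  define g1 where "g1 = g 1"
  have g1: "g1 > 0" unfolding g1_def g_def g_lambda_def using lam by simp
  define x1 where "x1 = min (1/2) ((g1 / (2 * M)) powr (1 / mu))"
  have x1: "0 < x1" "x1 < 1" using g1 Mpos by (auto simp: x1_def)
  have "x1 powr mu \<le> ((g1 / (2 * M)) powr (1 / mu)) powr mu"
    using x1 mu by (intro powr_mono2) (auto simp: x1_def)
  also have "\<dots> = g1 / (2 * M)" using mu g1 Mpos by (simp add: powr_powr)
  finally have "M * x1 powr mu \<le> M * (g1 / (2 * M))" using Mpos by (intro mult_left_mono) auto
  hence gx1: "g x1 < g1" using gup[OF x1(1)] g1 Mpos by (simp add: field_simps)
  obtain \<xi> where \<xi>: "x1 < \<xi>" "\<xi> < 1" "g 1 - g x1 = (1 - x1) * gd lam \<xi>"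
    using MVT2[of x1 1 g "gd lam"] x1 gder(1) by force
  have "gd lam \<xi> > 0"
  proof -
    have "(1 - x1) * gd lam \<xi> > 0" using \<xi>(3) gx1 by (simp add: g1_def)
    thus ?thesis using x1 by (simp add: zero_less_mult_iff)
  qed
  define c where "c = D 0 \<xi>"
  have \<xi>0: "\<xi> > 0" using \<xi> x1 by simp
  have c: "c > 0" unfolding c_def D0[OF \<xi>0] gder(2)[OF \<xi>0]
    using \<open>gd lam \<xi> > 0\<close> \<xi>0 by simp
  have gdlow: "gd lam t \<ge> c * t powr (\<tau> - 1)" if t: "0 < t" "t \<le> \<xi>" for t
  proof -
    have "c \<le> D 0 t" unfolding c_def using mono[OF t] .
    also have "D 0 t = gd lam t * t powr (1 - \<tau>)" using D0[OF t(1)] gder(2)[OF t(1)] by simp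
    finally have "c * t powr (\<tau> - 1) \<le> gd lam t * t powr (1 - \<tau>) * t powr (\<tau> - 1)"
      by (intro mult_right_mono) auto
    also have "\<dots> = gd lam t" using t by (simp add: mult.assoc powr_add[symmetric])
    finally show ?thesis .
  qed
  define k where "k t = g t - c / \<tau> * t powr \<tau>" for t
  have kmono: "k y \<le> k z" if yz: "0 < y" "y \<le> z" "z \<le> \<xi>" for y z
  proof (rule DERIV_nonneg_imp_nondecreasing[of y z k])
    show "y \<le> z" by fact
    fix s assume s: "y \<le> s" "s \<le> z"
    have s0: "s > 0" using s yz by simp
    have "(k has_real_derivative gd lam s - c / \<tau> * (\<tau> * s powr (\<tau> - 1))) (at s)"
      unfolding k_def by (intro DERIV_diff DERIV_cmult gder(1) s0 has_real_derivative_powr)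
    moreover have "gd lam s - c / \<tau> * (\<tau> * s powr (\<tau> - 1)) \<ge> 0"
      using gdlow[of s] s yz tau by simp
    ultimately show "\<exists>d. (k has_real_derivative d) (at s) \<and> 0 \<le> d" by blast
  qed
  define r where "r = (1/2 :: real) powr (1 / \<tau>)"
  have r1: "r < 1"
  proof -
    have "r < (1/2 :: real) powr 0" unfolding r_def using tau by (intro powr_less_mono') auto
    thus ?thesis by simp
  qed
  have r: "0 < r" "r < 1" "r powr \<tau> = 1/2" using tau r1
    by (auto simp: r_def powr_powr)
  have glow: "g z \<ge> c / (2 * \<tau>) * z powr \<tau>" if z: "0 < z" "z \<le> \<xi>" for z
  proof -
    have "k (r * z) \<le> k z" using r z by (intro kmono) (auto simp: mult_le_cancel_right1)
    moreover have "(r * z) powr \<tau> = z powr \<tau> / 2" using r z by (simp add: powr_mult)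
    moreover have "g (r * z) \<ge> 0" using r z by (intro gnn) auto
    ultimately have "c / \<tau> * (z powr \<tau> / 2) \<le> g z" by (simp add: k_def algebra_simps)
    thus ?thesis by (simp add: field_simps)
  qed
  define z where "z = min \<xi> ((c / (4 * \<tau> * M)) powr (1 / (mu - \<tau>)))"
  have mt: "mu - \<tau> > 0" using tau by (simp add: mu_def)
  have z: "0 < z" "z \<le> \<xi>" using \<xi>0 c tau Mpos by (auto simp: z_def)
  have "z powr (mu - \<tau>) \<le> ((c / (4 * \<tau> * M)) powr (1 / (mu - \<tau>))) powr (mu - \<tau>)"
    using z mt by (intro powr_mono2) (auto simp: z_def)
  also have "\<dots> = c / (4 * \<tau> * M)" using mt c tau Mpos by (simp add: powr_powr)
  finally have "M * z powr (mu - \<tau>) \<le> M * (c / (4 * \<tau> * M))" using Mpos by (intro mult_left_mono) auto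
  also have "\<dots> = c / (4 * \<tau>)" using Mpos by simp
  finally have zb: "M * z powr (mu - \<tau>) \<le> c / (4 * \<tau>)" .
  have "c / (2 * \<tau>) * z powr \<tau> \<le> M * z powr mu" using glow[OF z] gup[OF z(1)] by linarith
  also have "z powr mu = z powr \<tau> * z powr (mu - \<tau>)" using z by (simp add: powr_add[symmetric])
  finally have "c / (2 * \<tau>) * z powr \<tau> \<le> (M * z powr (mu - \<tau>)) * z powr \<tau>" by (simp add: mult_ac)
  hence "c / (2 * \<tau>) \<le> M * z powr (mu - \<tau>)" by (rule mult_right_le_imp_le) (use z in simp)
  with zb c tau show False by (simp add: field_simps)
qed

theorem proposition3p1:
  fixes lam :: real
  assumes "lam > 1"
  shows "class_B (lam - 1) (g_lambda lam) \<and>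
         (\<forall>\<tau>. 0 < \<tau> \<and> \<tau> < lam - 1 \<longrightarrow> \<not> class_B \<tau> (g_lambda lam))"
  using part1[OF assms] part2[OF assms] by blast

end
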